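(* Let $L\in\mathcal{L}_*^n$ and $f\in\operatorname{int}(L)$. Let $\gamma\in(0,1]$ and $L'=\gamma(L-f)+f$. Assume there are $m\in\mathbb{N}$, $t\in\mathbb{Z}$ and a maximal lattice-free set $D\in\mathcal{L}_m^{n-1}$ such that (a) $L\cap(\mathbb{R}^{n-1}\times\{t\})\subseteq D\times\{t\}$, (b) $w(L',e_n)\le1$, and (c) $L'\cap(\mathbb{R}^{n-1}\times\{t\})$ is nonempty. Then there exists a lattice-free set $B\in\mathcal{L}_{m+1}^n$ such that $\frac14\gamma(L-f)+f\subseteq B$.
   Context: For $d\in\mathbb{N}$, a set $B\subseteq\mathbb{R}^d$ is lattice-free if it is a $d$-dimensional closed convex set with $\operatorname{int}(B)\cap\mathbb{Z}^d=\emptyset$; it is maximal lattice-free if it is not a proper subset of another lattice-free set. $\mathcal{L}_i^d$ is the family of lattice-free polyhedra in $\mathbb{R}^d$ with at most $i$ facets, and $\mathcal{L}_*^d$ the family of all lattice-free polyhedra in $\mathbb{R}^d$. $e_n$ is the $n$-th standard basis vector, and for nonempty $X\subseteq\mathbb{R}^n$ and $u\in\mathbb{R}^n$, $w(X,u)=\sup_{x\in X}u\cdot x-\inf_{x\in X}u\cdot x$. *)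

theory Defs
  imports "HOL-Analysis.Analysis"
begin

definition int_points :: "'a::euclidean_space set" where
  "int_points = {x. \<forall>b\<in>Basis. x \<bullet> b \<in> \<int>}"

definition lattice_free :: "'a::euclidean_space set \<Rightarrow> bool" where
  "lattice_free B \<longleftrightarrow> closed B \<and> convex B \<and> aff_dim B = int DIM('a)
     \<and> interior B \<inter> int_points = {}"

definition max_lattice_free :: "'a::euclidean_space set \<Rightarrow> bool" where
  "max_lattice_free B \<longleftrightarrow> lattice_free B \<and> (\<forall>C. lattice_free C \<and> B \<subseteq> C \<longrightarrow> C = B)"

text \<open>The family L_i^d: lattice-free polyhedra with at most i facets.\<close>
definition lf_poly :: "nat \<Rightarrow> 'a::euclidean_space set set" where
  "lf_poly i = {B. lattice_free B \<and> polyhedron B \<and> finite {F. F facet_of B}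
                   \<and> card {F. F facet_of B} \<le> i}"

text \<open>The family L_*^d: all lattice-free polyhedra.\<close>
definition lf_poly_all :: "'a::euclidean_space set set" where
  "lf_poly_all = {B. lattice_free B \<and> polyhedron B}"

text \<open>Width w(X,u), in the extended reals (infinite if unbounded).\<close>
definition width :: "'a::euclidean_space set \<Rightarrow> 'a \<Rightarrow> ereal" where
  "width X u = (SUP x\<in>X. ereal (u \<bullet> x)) - (INF x\<in>X. ereal (u \<bullet> x))"

end

theory Submission
  imports Defs
begin


lemma int_point_near:
  fixes c :: "'a::euclidean_space"
  shows "\<exists>z\<in>int_points. norm (c - z) < real DIM('a)"
proof -
  define z where "z = (\<Sum>b\<in>Basis. of_int \<lfloor>c \<bullet> b\<rfloor> *\<^sub>R b :: 'a)"
  have zb: "z \<bullet> b = of_int \<lfloor>c \<bullet> b\<rfloor>" if "b \<in> Basis" for b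
    using that by (simp add: z_def inner_sum_left inner_Basis if_distrib cong: if_cong)
  have zi: "z \<in> int_points" using zb by (auto simp: int_points_def)
  have "norm (c - z) \<le> (\<Sum>b\<in>Basis. \<bar>(c - z) \<bullet> b\<bar>)" by (rule norm_le_l1)
  also have "\<dots> < (\<Sum>b\<in>(Basis::'a set). 1)"
  proof (rule sum_strict_mono)
    show "finite (Basis::'a set)" by simp
    show "(Basis::'a set) \<noteq> {}" by simp
    fix b :: 'a assume "b \<in> Basis"
    then show "\<bar>(c - z) \<bullet> b\<bar> < 1"
      using zb[of b] by (simp add: inner_diff_left) linarith
  qed
  also have "\<dots> = real DIM('a)" by simp
  finally show ?thesis using zi by blast
qed



lemma lf_nonempty: "lattice_free (D::'a::euclidean_space set) \<Longrightarrow> D \<noteq> {}"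
proof
  assume "lattice_free D" "D = {}"
  then have "int DIM('a) = -1" unfolding lattice_free_def by simp
  then show False by simp
qed

lemma lf_interior_ne: "lattice_free (D::'a::euclidean_space set) \<Longrightarrow> interior D \<noteq> {}"
proof -
  assume lf: "lattice_free D"
  then have "D \<noteq> {}" by (rule lf_nonempty)
  then have "rel_interior D \<noteq> {}" using lf rel_interior_eq_empty unfolding lattice_free_def by blast
  then show ?thesis using lf interior_rel_interior_gen unfolding lattice_free_def by metis
qed

lemma zero_int_points: "(0::'a::euclidean_space) \<in> int_points"
  by (simp add: int_points_def)

lemma no_descent:
  fixes D :: "'a::euclidean_space set"
  assumes lf: "lattice_free D" and fin: "finite I"
    and Deq: "D = (\<Inter>i\<in>I. {x. a i \<bullet> x \<le> b i})"
    and u: "\<forall>i\<in>I. a i \<bullet> u < 0"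
  shows False
proof -
  obtain d where d: "d \<in> D" using lf_nonempty[OF lf] by blast
  have strict_int: "x \<in> interior D" if "\<forall>i\<in>I. a i \<bullet> x < b i" for x
  proof -
    have "open (\<Inter>i\<in>I. {x. a i \<bullet> x < b i})"
      using fin by (intro open_INT) (auto intro: open_halfspace_lt)
    moreover have "(\<Inter>i\<in>I. {x. a i \<bullet> x < b i}) \<subseteq> D" using Deq less_imp_le by fastforce
    ultimately show ?thesis using that interior_maximal by blast
  qed
  show False
  proof (cases "I = {}")
    case True
    then have "0 \<in> interior D" using strict_int by simp
    then show False using lf zero_int_points unfolding lattice_free_def by blast
  next
    case False
    define \<mu> where "\<mu> = Min ((\<lambda>i. - (a i \<bullet> u)) ` I)"
    define M where "M = 1 + Max ((\<lambda>i. norm (a i)) ` I)"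
    have \<mu>pos: "\<mu> > 0" unfolding \<mu>_def using fin False u by simp
    have \<mu>le: "\<mu> \<le> - (a i \<bullet> u)" if "i \<in> I" for i unfolding \<mu>_def using fin that by simp
    have Mge: "norm (a i) < M" if "i \<in> I" for i
    proof -
      have "norm (a i) \<le> Max ((\<lambda>i. norm (a i)) ` I)" using fin that by simp
      then show ?thesis unfolding M_def by simp
    qed
    obtain i0 where "i0 \<in> I" using False by blast
    have Mpos: "M > 0" using Mge[OF \<open>i0 \<in> I\<close>] norm_ge_zero[of "a i0"] by linarith
    define lam where "lam = real DIM('a) * M / \<mu>"
    have lam0: "lam \<ge> 0" unfolding lam_def using \<mu>pos Mpos by simp
    define c where "c = d + lam *\<^sub>R u"
    obtain z where z: "z \<in> int_points" "norm (c - z) < real DIM('a)"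
      using int_point_near by blast
    have "a i \<bullet> z < b i" if i: "i \<in> I" for i
    proof -
      have adb: "a i \<bullet> d \<le> b i" using d Deq i by auto
      have "a i \<bullet> z = a i \<bullet> d + lam * (a i \<bullet> u) - a i \<bullet> (c - z)"
        by (simp add: c_def inner_diff_right inner_add_right)
      also have "lam * (a i \<bullet> u) \<le> - lam * \<mu>"
        using mult_left_mono[OF \<mu>le[OF i] lam0] by simp
      moreover have "- (a i \<bullet> (c - z)) \<le> norm (a i) * norm (c - z)"
        by (metis Cauchy_Schwarz_ineq2 abs_le_iff inner_minus_left norm_minus_cancel)
      moreover have "norm (a i) * norm (c - z) < M * real DIM('a)"
      proof -
        have "norm (a i) * norm (c - z) \<le> norm (a i) * real DIM('a)"
          using z(2) by (simp add: mult_left_mono)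
        also have "\<dots> < M * real DIM('a)" using Mge[OF i] by simp
        finally show ?thesis .
      qed
      moreover have "lam * \<mu> = M * real DIM('a)" unfolding lam_def using \<mu>pos by simp
      ultimately show ?thesis using adb by linarith
    qed
    then have "z \<in> interior D" using strict_int by blast
    then show False using lf z(1) unfolding lattice_free_def by blast
  qed
qed



lemma facet_rep:
  fixes D :: "'a::euclidean_space set"
  assumes poly: "polyhedron D" and int: "interior D \<noteq> {}"
  obtains a b where "\<And>C. C facet_of D \<Longrightarrow> a C \<noteq> 0 \<and> D \<subseteq> {x. a C \<bullet> x \<le> b C}"
    "D = (\<Inter>C\<in>{C. C facet_of D}. {x. a C \<bullet> x \<le> b C})"
proof -
  have "\<forall>C. \<exists>p. C facet_of D \<longrightarrow> fst p \<noteq> 0 \<and> D \<subseteq> {x. fst p \<bullet> x \<le> snd p} \<and> C = D \<inter> {x. fst p \<bullet> x = snd p}"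
  proof
    fix C show "\<exists>p. C facet_of D \<longrightarrow> fst p \<noteq> 0 \<and> D \<subseteq> {x. fst p \<bullet> x \<le> snd p} \<and> C = D \<inter> {x. fst p \<bullet> x = snd p}"
    proof (cases "C facet_of D")
      case True
      then obtain a b where "a \<noteq> 0" "D \<subseteq> {x. a \<bullet> x \<le> b}" "C = D \<inter> {x. a \<bullet> x = b}"
        using facet_of_polyhedron[OF poly] by metis
      then show ?thesis by (intro exI[of _ "(a,b)"]) auto
    qed auto
  qed
  then obtain P where P: "\<And>C. C facet_of D \<Longrightarrow> fst (P C) \<noteq> 0 \<and> D \<subseteq> {x. fst (P C) \<bullet> x \<le> snd (P C)} \<and> C = D \<inter> {x. fst (P C) \<bullet> x = snd (P C)}"
    by metis
  define a where "a C = fst (P C)" for C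
  define b where "b C = snd (P C)" for C
  have 1: "\<And>C. C facet_of D \<Longrightarrow> a C \<noteq> 0 \<and> D \<subseteq> {x. a C \<bullet> x \<le> b C}"
    using P by (simp add: a_def b_def)
  have 2: "D = (\<Inter>C\<in>{C. C facet_of D}. {x. a C \<bullet> x \<le> b C})"
  proof
    show "D \<subseteq> (\<Inter>C\<in>{C. C facet_of D}. {x. a C \<bullet> x \<le> b C})" using 1 by blast
  next
    show "(\<Inter>C\<in>{C. C facet_of D}. {x. a C \<bullet> x \<le> b C}) \<subseteq> D"
    proof
      fix x assume x: "x \<in> (\<Inter>C\<in>{C. C facet_of D}. {x. a C \<bullet> x \<le> b C})"
      show "x \<in> D"
      proof (rule ccontr)
        assume xD: "x \<notin> D"
        obtain d where d: "d \<in> interior D" using int by blast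
        have "closed_segment d x \<inter> frontier D \<noteq> {}"
        proof (rule connected_Int_frontier)
          show "connected (closed_segment d x)" by simp
          show "closed_segment d x \<inter> D \<noteq> {}" using d interior_subset by fastforce
          show "closed_segment d x - D \<noteq> {}" using xD by auto
        qed
        then obtain z where zs: "z \<in> closed_segment d x" and zf: "z \<in> frontier D" by blast
        have clD: "closed D" using poly polyhedron_imp_closed by blast
        have zD: "z \<in> D" and zni: "z \<notin> interior D"
          using zf clD by (auto simp: frontier_def)
        have "rel_interior D = interior D" using int rel_interior_nonempty_interior by blast
        then have "z \<in> D - rel_interior D" using zD zni by blast
        then obtain C where C: "C facet_of D" "z \<in> C"
          using rel_interior_of_polyhedron[OF poly] by blast
        have aCnz: "a C \<noteq> 0" and Dsub: "D \<subseteq> {x. a C \<bullet> x \<le> b C}" using 1[OF C(1)] by auto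
        have zeq: "a C \<bullet> z = b C" using P[OF C(1)] C(2) unfolding a_def b_def by blast
        have "d \<in> interior {x. a C \<bullet> x \<le> b C}" using d interior_mono[OF Dsub] by blast
        then have ad: "a C \<bullet> d < b C" using aCnz by simp
        have ax: "a C \<bullet> x \<le> b C" using x C(1) by blast
        obtain \<theta> where th: "0 \<le> \<theta>" "\<theta> \<le> 1" "z = (1 - \<theta>) *\<^sub>R d + \<theta> *\<^sub>R x"
          using zs by (auto simp: closed_segment_def)
        have "\<theta> \<noteq> 1" using th zD xD by auto
        then have "\<theta> < 1" using th by simp
        have "a C \<bullet> z = (1 - \<theta>) * (a C \<bullet> d) + \<theta> * (a C \<bullet> x)"
          using th(3) by (simp add: inner_add_right)
        also have "\<dots> < (1 - \<theta>) * b C + \<theta> * b C"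
          using ad ax \<open>\<theta> < 1\<close> th(1)
          by (intro add_less_le_mono mult_strict_left_mono mult_left_mono) auto
        finally show False using zeq by (simp add: algebra_simps)
      qed
    qed
  qed
  show ?thesis using 1 2 that by blast
qed

lemma facets_card_le:
  fixes B :: "'a::euclidean_space set"
  assumes fin: "finite J" and Beq: "B = (\<Inter>j\<in>J. {x. p j \<bullet> x \<le> q j})"
    and pnz: "\<forall>j\<in>J. p j \<noteq> 0" and int: "interior B \<noteq> {}"
  shows "finite {C. C facet_of B} \<and> card {C. C facet_of B} \<le> card J"
proof -
  have conv: "convex B" unfolding Beq by (intro convex_INT) (auto intro: convex_halfspace_le)
  have sub: "{C. C facet_of B} \<subseteq> (\<lambda>j. B \<inter> {x. p j \<bullet> x = q j}) ` J"
  proof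
    fix C assume "C \<in> {C. C facet_of B}"
    then have C: "C facet_of B" by simp
    then have Cf: "C face_of B" and Cne: "C \<noteq> {}" and Cdim: "aff_dim C = aff_dim B - 1"
      by (auto simp: facet_of_def)
    have Cconv: "convex C" using Cf face_of_imp_convex by blast
    obtain x where xr: "x \<in> rel_interior C" using Cne Cconv rel_interior_eq_empty by blast
    have xC: "x \<in> C" using xr rel_interior_subset by blast
    have xB: "x \<in> B" using xC Cf face_of_imp_subset by blast
    have CneB: "C \<noteq> B" using Cdim by auto
    have "x \<notin> rel_interior B" using face_of_disjoint_rel_interior[OF Cf CneB] xC by blast
    then have xni: "x \<notin> interior B" using int rel_interior_nonempty_interior by blast
    have "\<exists>j\<in>J. \<not> p j \<bullet> x < q j"
    proof (rule ccontr)
      assume "\<not> (\<exists>j\<in>J. \<not> p j \<bullet> x < q j)"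
      then have xs: "x \<in> (\<Inter>j\<in>J. {x. p j \<bullet> x < q j})" by blast
      have "open (\<Inter>j\<in>J. {x. p j \<bullet> x < q j})"
        using fin by (intro open_INT) (auto intro: open_halfspace_lt)
      moreover have "(\<Inter>j\<in>J. {x. p j \<bullet> x < q j}) \<subseteq> B" using Beq less_imp_le by fastforce
      ultimately show False using xs xni interior_maximal by blast
    qed
    then obtain j where j: "j \<in> J" "\<not> p j \<bullet> x < q j" by blast
    have Bj: "\<And>y. y \<in> B \<Longrightarrow> p j \<bullet> y \<le> q j" using Beq j(1) by blast
    have xeq: "p j \<bullet> x = q j" using Bj[OF xB] j(2) by simp
    define F where "F = B \<inter> {x. p j \<bullet> x = q j}"
    have Ff: "F face_of B" unfolding F_def using face_of_Int_supporting_hyperplane_le[OF conv] Bj by blast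
    have CF: "C \<subseteq> F"
      by (rule subset_of_face_of[OF Ff]) (use Cf face_of_imp_subset xr xeq xB F_def in auto)
    have CfF: "C face_of F" using face_of_subset[OF Cf CF] F_def by blast
    have FneB: "F \<noteq> B"
    proof
      assume "F = B"
      then have "B \<subseteq> {x. p j \<bullet> x = q j}" unfolding F_def by blast
      then have "interior B \<subseteq> interior {x. p j \<bullet> x = q j}" by (rule interior_mono)
      moreover have "interior {x. p j \<bullet> x = q j} = {}"
        using pnz j(1) by (simp add: interior_hyperplane)
      ultimately show False using int by blast
    qed
    have "aff_dim F < aff_dim B" using face_of_aff_dim_lt[OF conv Ff FneB] .
    moreover have Fconv: "convex F" using Ff face_of_imp_convex by blast
    have "C = F"
    proof (rule ccontr)
      assume "C \<noteq> F"
      then have "aff_dim C < aff_dim F" using face_of_aff_dim_lt[OF Fconv CfF] by blast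
      then show False using \<open>aff_dim F < aff_dim B\<close> Cdim by simp
    qed
    then show "C \<in> (\<lambda>j. B \<inter> {x. p j \<bullet> x = q j}) ` J" using j(1) F_def by blast
  qed
  have "finite {C. C facet_of B}" using finite_subset[OF sub] fin by blast
  moreover have "card {C. C facet_of B} \<le> card J"
    using card_mono[OF _ sub] card_image_le[OF fin] fin by (meson finite_imageI order_trans)
  ultimately show ?thesis by blast
qed



lemma int_points_prod:
  fixes x :: "'a::euclidean_space \<times> real"
  assumes "x \<in> int_points"
  shows "fst x \<in> int_points" "snd x \<in> \<int>"
proof -
  have "\<forall>b\<in>(Basis::('a\<times>real) set). x \<bullet> b \<in> \<int>" using assms by (simp add: int_points_def)
  then have 1: "\<And>u. u \<in> Basis \<Longrightarrow> x \<bullet> (u, 0) \<in> \<int>" and 2: "x \<bullet> (0, 1) \<in> \<int>"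
    by (auto simp: Basis_prod_def)
  show "fst x \<in> int_points" using 1 by (auto simp: int_points_def inner_Pair_0)
  show "snd x \<in> \<int>" using 2 by (simp add: inner_Pair_0)
qed

lemma lf_halfspaces:
  fixes B :: "'a::euclidean_space set"
  assumes fin: "finite J" and Beq: "B = (\<Inter>j\<in>J. {x. p j \<bullet> x \<le> q j})"
    and pnz: "\<forall>j\<in>J. p j \<noteq> 0" and x0: "\<forall>j\<in>J. p j \<bullet> x0 < q j"
    and nolat: "\<And>x. x \<in> int_points \<Longrightarrow> \<forall>j\<in>J. p j \<bullet> x < q j \<Longrightarrow> False"
  shows "B \<in> lf_poly (card J)"
proof -
  have opn: "open (\<Inter>j\<in>J. {x. p j \<bullet> x < q j})"
    using fin by (intro open_INT) (auto intro: open_halfspace_lt)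
  have ssub: "(\<Inter>j\<in>J. {x. p j \<bullet> x < q j}) \<subseteq> B" using Beq less_imp_le by fastforce
  have int: "interior B \<noteq> {}" using x0 opn ssub interior_maximal by blast
  have intsub: "interior B \<subseteq> (\<Inter>j\<in>J. {x. p j \<bullet> x < q j})"
  proof
    fix x assume x: "x \<in> interior B"
    show "x \<in> (\<Inter>j\<in>J. {x. p j \<bullet> x < q j})"
    proof
      fix j assume j: "j \<in> J"
      have "B \<subseteq> {x. p j \<bullet> x \<le> q j}" using Beq j by blast
      then have "x \<in> interior {x. p j \<bullet> x \<le> q j}" using x interior_mono by blast
      then show "x \<in> {x. p j \<bullet> x < q j}" using pnz j by simp
    qed
  qed
  have poly: "polyhedron B" unfolding Beq
    by (intro polyhedron_Inter) (auto simp: fin polyhedron_halfspace_le)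
  have lf: "lattice_free B" unfolding lattice_free_def
  proof (intro conjI)
    show "closed B" using poly polyhedron_imp_closed by blast
    show "convex B" using poly polyhedron_imp_convex by blast
    show "aff_dim B = int DIM('a)" using int aff_dim_nonempty_interior by blast
    show "interior B \<inter> int_points = {}" using intsub nolat by blast
  qed
  have "finite {C. C facet_of B} \<and> card {C. C facet_of B} \<le> card J"
    by (rule facets_card_le[OF fin Beq pnz int])
  then show ?thesis using lf poly by (simp add: lf_poly_def)
qed

lemma lf_poly_mono: "B \<in> lf_poly i \<Longrightarrow> i \<le> j \<Longrightarrow> B \<in> lf_poly j"
  by (auto simp: lf_poly_def)

lemma cone_lf:
  fixes D :: "'a::euclidean_space set" and I :: "'i set" and t :: real
  assumes lfD: "lattice_free D" and finI: "finite I"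
    and Deq: "D = (\<Inter>i\<in>I. {x. a i \<bullet> x \<le> b i})" and anz: "\<forall>i\<in>I. a i \<noteq> 0"
    and sig: "\<sigma> = 1 \<or> \<sigma> = -1" and tZ: "t \<in> \<int>" and kap: "\<kappa> \<ge> 1"
    and c: "\<forall>i\<in>I. c i \<ge> \<kappa> * (b i - a i \<bullet> w)"
  shows "{x::'a\<times>real. -1 \<le> \<sigma>*(snd x - t) \<and> (\<forall>i\<in>I. a i \<bullet> fst x + c i * (\<sigma>*(snd x - t)) \<le> b i)}
           \<in> lf_poly (card I + 1)"
proof -
  define J where "J = insert None (Some ` I)"
  define p where "p j = (case j of None \<Rightarrow> ((0::'a), -\<sigma>) | Some i \<Rightarrow> (a i, c i * \<sigma>))" for j
  define q where "q j = (case j of None \<Rightarrow> 1 - \<sigma> * t | Some i \<Rightarrow> b i + c i * \<sigma> * t)" for j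
  have finJ: "finite J" using finI by (simp add: J_def)
  have cardJ: "card J = card I + 1"
    using finI by (simp add: J_def card_image)
  have Beq: "{x::'a\<times>real. -1 \<le> \<sigma>*(snd x - t) \<and> (\<forall>i\<in>I. a i \<bullet> fst x + c i * (\<sigma>*(snd x - t)) \<le> b i)}
     = (\<Inter>j\<in>J. {x. p j \<bullet> x \<le> q j})"
    by (auto simp: J_def p_def q_def inner_prod_def algebra_simps)
  have pnz: "\<forall>j\<in>J. p j \<noteq> 0" using sig anz by (auto simp: J_def p_def zero_prod_def)
  obtain y0 where y0: "y0 \<in> interior D" using lf_interior_ne[OF lfD] by blast
  have y0s: "a i \<bullet> y0 < b i" if "i \<in> I" for i
  proof -
    have "D \<subseteq> {x. a i \<bullet> x \<le> b i}" using Deq that by blast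
    then have "y0 \<in> interior {x. a i \<bullet> x \<le> b i}" using y0 interior_mono by blast
    then show ?thesis using anz that by simp
  qed
  have x0: "\<forall>j\<in>J. p j \<bullet> (y0, t) < q j"
    using y0s by (auto simp: J_def p_def q_def inner_prod_def algebra_simps)
  obtain d0 where d0: "d0 \<in> D" using lf_nonempty[OF lfD] by blast
  have nolat: False if xi: "x \<in> int_points" and xs: "\<forall>j\<in>J. p j \<bullet> x < q j" for x
  proof -
    have s1: "-1 < \<sigma> * (snd x - t)" using xs by (auto simp: J_def p_def q_def inner_prod_def algebra_simps)
    have s2: "a i \<bullet> fst x + c i * (\<sigma> * (snd x - t)) < b i" if "i \<in> I" for i
      using xs that by (auto simp: J_def p_def q_def inner_prod_def algebra_simps)
    define k where "k = \<sigma> * (snd x - t)"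
    have kZ: "k \<in> \<int>" unfolding k_def using sig int_points_prod(2)[OF xi] tZ by auto
    then obtain kk where kk: "k = of_int kk" by (auto elim: Ints_cases)
    have "kk \<ge> 0" using s1 kk k_def by simp
    show False
    proof (cases "kk = 0")
      case True
      have k0: "\<sigma> * (snd x - t) = 0" using True kk k_def by simp
      have "\<forall>i\<in>I. a i \<bullet> fst x < b i" using s2 k0 by simp
      then have "fst x \<in> interior D"
      proof -
        assume st: "\<forall>i\<in>I. a i \<bullet> fst x < b i"
        have "open (\<Inter>i\<in>I. {x. a i \<bullet> x < b i})"
          using finI by (intro open_INT) (auto intro: open_halfspace_lt)
        moreover have "(\<Inter>i\<in>I. {x. a i \<bullet> x < b i}) \<subseteq> D" using Deq less_imp_le by fastforce
        ultimately show ?thesis using st interior_maximal by blast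
      qed
      then show False using lfD int_points_prod(1)[OF xi] unfolding lattice_free_def by blast
    next
      case False
      then have k1: "k \<ge> 1" using \<open>kk \<ge> 0\<close> kk by simp
      define JJ where "JJ = \<kappa> * k"
      have JJ1: "JJ \<ge> 1" unfolding JJ_def using kap k1 by (metis mult_mono' mult_1 zero_le_one)
      define u where "u = fst x - JJ *\<^sub>R w + (JJ - 1) *\<^sub>R d0"
      have "a i \<bullet> u < 0" if i: "i \<in> I" for i
      proof -
        have ad0: "a i \<bullet> d0 \<le> b i" using d0 Deq i by blast
        have "c i * k \<ge> \<kappa> * (b i - a i \<bullet> w) * k" using c i k1 by (simp add: mult_right_mono)
        then have ck: "c i * k \<ge> JJ * (b i - a i \<bullet> w)" unfolding JJ_def by (simp add: algebra_simps)
        have "(JJ - 1) * (a i \<bullet> d0) \<le> (JJ - 1) * b i" using ad0 JJ1 by (simp add: mult_left_mono)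
        moreover have "a i \<bullet> fst x + c i * k < b i" using s2[OF i] k_def by simp
        moreover have "a i \<bullet> u = a i \<bullet> fst x - JJ * (a i \<bullet> w) + (JJ - 1) * (a i \<bullet> d0)"
          by (simp add: u_def inner_add_right inner_diff_right)
        ultimately show ?thesis using ck by (simp add: algebra_simps)
      qed
      then show False using no_descent[OF lfD finI Deq] by blast
    qed
  qed
  have "{x::'a\<times>real. -1 \<le> \<sigma>*(snd x - t) \<and> (\<forall>i\<in>I. a i \<bullet> fst x + c i * (\<sigma>*(snd x - t)) \<le> b i)}
           \<in> lf_poly (card J)"
    using lf_halfspaces[OF finJ Beq pnz x0] nolat by blast
  then show ?thesis using cardJ by simp
qed

lemma slab_lf:
  fixes t :: real
  assumes sig: "\<sigma> = 1 \<or> \<sigma> = -1" and tZ: "t \<in> \<int>"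
  shows "{x::'a::euclidean_space\<times>real. -1 \<le> \<sigma>*(snd x - t) \<and> \<sigma>*(snd x - t) \<le> 0} \<in> lf_poly 2"
proof -
  define J where "J = {True, False}"
  define p where "p j = (if j then ((0::'a), -\<sigma>) else (0, \<sigma>))" for j
  define q where "q j = (if j then 1 - \<sigma> * t else \<sigma> * t)" for j
  have Beq: "{x::'a\<times>real. -1 \<le> \<sigma>*(snd x - t) \<and> \<sigma>*(snd x - t) \<le> 0} = (\<Inter>j\<in>J. {x. p j \<bullet> x \<le> q j})"
    by (auto simp: J_def p_def q_def inner_prod_def algebra_simps)
  have pnz: "\<forall>j\<in>J. p j \<noteq> 0" using sig by (auto simp: J_def p_def zero_prod_def)
  have x0: "\<forall>j\<in>J. p j \<bullet> ((0::'a), t - \<sigma>/2) < q j"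
    using sig by (auto simp: J_def p_def q_def inner_prod_def algebra_simps)
  have nolat: False if xi: "x \<in> int_points" and xs: "\<forall>j\<in>J. p j \<bullet> x < q j" for x :: "'a \<times> real"
  proof -
    define k where "k = \<sigma> * (snd x - t)"
    have kZ: "k \<in> \<int>" unfolding k_def using sig int_points_prod(2)[OF xi] tZ by auto
    then obtain kk where kk: "k = of_int kk" by (auto elim: Ints_cases)
    have "-1 < k" "k < 0" using xs by (auto simp: k_def J_def p_def q_def inner_prod_def algebra_simps)
    then show False using kk by simp
  qed
  have "card J = 2" by (simp add: J_def)
  moreover have "{x::'a\<times>real. -1 \<le> \<sigma>*(snd x - t) \<and> \<sigma>*(snd x - t) \<le> 0} \<in> lf_poly (card J)"
    by (rule lf_halfspaces[OF _ Beq pnz x0 nolat]) (simp add: J_def)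
  ultimately show ?thesis by simp
qed



lemma scal1:
  fixes A \<delta> F X Q b \<tau> :: real
  assumes A: "A > 0" and Ad: "A - \<delta> > 0"
    and h: "F + (A/(4*(A-\<delta>)))*(X - F) + (\<delta>*\<tau>/(A-\<delta>))*(Q - F) \<le> b"
  shows "F + (X - F)/4 + (1/A)*(b - (F + \<tau>*(F - Q)))*\<delta> \<le> b"
proof -
  define \<alpha> where "\<alpha> = A/(4*(A-\<delta>))"
  define \<beta> where "\<beta> = \<delta>*\<tau>/(A-\<delta>)"
  have h1: "(A-\<delta>) * (F + \<alpha>*(X - F) + \<beta>*(Q - F)) \<le> (A-\<delta>)*b"
    using h Ad unfolding \<alpha>_def \<beta>_def by (simp add: mult_left_mono)
  have e1: "(A-\<delta>)*\<alpha> = A/4" using Ad unfolding \<alpha>_def by (simp add: field_simps)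
  have e2: "(A-\<delta>)*\<beta> = \<delta>*\<tau>" using Ad unfolding \<beta>_def by simp
  have "(A-\<delta>)*F + (A/4)*(X-F) + \<delta>*\<tau>*(Q-F) = (A-\<delta>)*F + ((A-\<delta>)*\<alpha>)*(X-F) + ((A-\<delta>)*\<beta>)*(Q-F)"
    by (simp only: e1 e2)
  also have "\<dots> = (A-\<delta>) * (F + \<alpha>*(X - F) + \<beta>*(Q - F))" by (simp add: algebra_simps)
  also have "\<dots> \<le> (A-\<delta>)*b" by (rule h1)
  finally have h2: "(A-\<delta>)*F + (A/4)*(X-F) + \<delta>*\<tau>*(Q-F) \<le> (A-\<delta>)*b" .
  have "A * (F + (X - F)/4 + (1/A)*(b - (F + \<tau>*(F - Q)))*\<delta>) = (A-\<delta>)*F + (A/4)*(X-F) + \<delta>*\<tau>*(Q-F) + \<delta>*b"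
    using A by (simp add: field_simps)
  also have "\<dots> \<le> A * b" using h2 by (simp add: algebra_simps)
  finally show ?thesis using A by (simp add: mult_le_cancel_left_pos)
qed

lemma core:
  fixes Lp S :: "('a::euclidean_space \<times> real) set" and D :: "'a set"
    and f q0 :: "'a \<times> real" and t \<sigma> d G H :: real and I :: "'i set"
  assumes lfD: "lattice_free D" and finI: "finite I"
    and Deq: "D = (\<Inter>i\<in>I. {x. a i \<bullet> x \<le> b i})" and anz: "\<forall>i\<in>I. a i \<noteq> 0"
    and sig: "\<sigma> = 1 \<or> \<sigma> = -1" and tZ: "t \<in> \<int>"
    and convLp: "convex Lp" and fL: "f \<in> Lp" and q0L: "q0 \<in> Lp"
    and slice: "\<forall>x\<in>Lp. snd x = t \<longrightarrow> fst x \<in> D"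
    and Sdef: "S = (\<lambda>x. (1/4) *\<^sub>R (x - f) + f) ` Lp"
    and dd: "d = \<sigma>*(snd f - t)" and GG: "G = d - \<sigma>*(snd q0 - t)"
    and Hb: "\<forall>x\<in>Lp. \<sigma>*(snd x - t) \<le> d + H"
    and low: "\<forall>x\<in>Lp. -1 \<le> \<sigma>*(snd x - t)"
    and c1: "3*G > 4*d + H" and c2: "G*(3 - 4*d - H) \<ge> (4*d + H)*(1 - d)"
    and above: "\<exists>z\<in>S. \<sigma>*(snd z - t) > 0"
  shows "\<exists>B. B \<in> lf_poly (card I + 1) \<and> S \<subseteq> B"
proof -
  have ss: "\<sigma> * \<sigma> = 1" using sig by auto
  have snz: "\<sigma> \<noteq> 0" using sig by auto
  have SinL: "S \<subseteq> Lp"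
  proof
    fix z assume "z \<in> S"
    then obtain x where x: "x \<in> Lp" "z = (1/4) *\<^sub>R (x - f) + f" using Sdef by blast
    have eq: "(1/4::real) *\<^sub>R (x - f) + f = (1 - 1/4::real) *\<^sub>R f + (1/4::real) *\<^sub>R x"
      by (simp add: algebra_simps flip: scaleR_add_left)
    have "(1 - 1/4::real) *\<^sub>R f + (1/4::real) *\<^sub>R x \<in> Lp"
      by (rule convexD_alt[OF convLp fL x(1)]) auto
    then show "z \<in> Lp" using x(2) eq by metis
  qed
  have convS: "convex S" unfolding Sdef
  proof -
    have "(\<lambda>x. (1/4) *\<^sub>R (x - f) + f) = (\<lambda>x. (f - (1/4) *\<^sub>R f) + (1/4::real) *\<^sub>R x)"
      by (auto simp: algebra_simps)
    then show "convex ((\<lambda>x. (1/4) *\<^sub>R (x - f) + f) ` Lp)"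
      using convex_affinity[OF convLp] by metis
  qed
  have levS: "\<sigma>*(snd z - t) = (\<sigma>*(snd x - t) - d)/4 + d" if "z = (1/4) *\<^sub>R (x - f) + f" for z x
  proof -
    have "snd z = (snd x - snd f)/4 + snd f" unfolding that by simp
    then show ?thesis using dd by (simp add: algebra_simps)
  qed
  have H0: "H \<ge> 0" using Hb fL dd by auto
  obtain zs where zs: "zs \<in> S" "\<sigma>*(snd zs - t) > 0" using above by blast
  have P: "4*d + H > 0"
  proof -
    obtain x where x: "x \<in> Lp" "zs = (1/4) *\<^sub>R (x - f) + f" using zs Sdef by blast
    have "\<sigma>*(snd zs - t) = (\<sigma>*(snd x - t) - d)/4 + d" using levS[OF x(2)] .
    moreover have "\<sigma>*(snd x - t) \<le> d + H" using Hb x(1) by blast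
    moreover have e: "\<And>u v. u = (v - d)/4 + d \<Longrightarrow> v \<le> d + H \<Longrightarrow> 0 < u \<Longrightarrow> 0 < 4*d + H" by argo
    ultimately show ?thesis using zs(2) by blast
  qed
  have Gpos: "G > 0" using c1 P by simp
  have den: "3*G - 4*d - H > 0" using c1 by simp
  define \<tau> where "\<tau> = (d + H)/(3*G - 4*d - H)"
  have tau0: "\<tau> \<ge> 0" unfolding \<tau>_def using den P H0 by simp
  have taueq: "\<tau> * (3*G - 4*d - H) = d + H" unfolding \<tau>_def using den by simp
  define A where "A = d + \<tau> * G"
  have A1: "A \<le> 1"
  proof -
    have "A * (3*G - 4*d - H) = d*(3*G - 4*d - H) + G*(d + H)"
      unfolding A_def using taueq by (simp add: algebra_simps)
    also have "\<dots> \<le> 3*G - 4*d - H" using c2 by (simp add: algebra_simps)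
    finally show ?thesis using den by (simp add: mult_le_cancel_right1)
  qed
  have Agt: "A - (d + H/4) > 0"
  proof -
    have "(A - (d + H/4)) * (3*G - 4*d - H) = G*(d+H) - (H/4)*(3*G - 4*d - H)"
      unfolding A_def using taueq by (simp add: algebra_simps)
    also have "\<dots> = (4*d + H)*(G + H)/4" by (simp add: algebra_simps)
    also have "\<dots> > 0" using P Gpos H0 by simp
    finally show ?thesis using den by (simp add: zero_less_mult_iff)
  qed
  have Apos: "A > 0" using Agt P by linarith
  have key34: "(d + H/4)*(1 + \<tau>) = 3*A/4"
    unfolding A_def using taueq by (simp add: algebra_simps)
  define \<kappa> where "\<kappa> = 1/A"
  have kap: "\<kappa> \<ge> 1" unfolding \<kappa>_def using Apos A1 by simp
  define xbar where "xbar = f + \<tau> *\<^sub>R (f - q0)"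
  define w where "w = fst xbar"
  have cone: "a i \<bullet> fst z + \<kappa>*(b i - a i \<bullet> w)*(\<sigma>*(snd z - t)) \<le> b i"
    if zS: "z \<in> S" and z0: "\<sigma>*(snd z - t) \<ge> 0" and i: "i \<in> I" for z i
  proof -
    obtain x where x: "x \<in> Lp" "z = (1/4) *\<^sub>R (x - f) + f" using zS Sdef by blast
    define \<delta> where "\<delta> = \<sigma>*(snd z - t)"
    define X where "X = \<sigma>*(snd x - t)"
    have \<delta>X: "\<delta> = (X - d)/4 + d" unfolding \<delta>_def X_def using levS[OF x(2)] .
    have Xle: "X \<le> d + H" unfolding X_def using Hb x(1) by blast
    have \<delta>le: "\<delta> \<le> d + H/4" using \<delta>X Xle by simp
    have \<delta>0: "\<delta> \<ge> 0" using z0 \<delta>_def by simp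
    have Ad: "A - \<delta> > 0" using Agt \<delta>le by linarith
    define \<omega>1 where "\<omega>1 = A/(4*(A-\<delta>))"
    define \<omega>2 where "\<omega>2 = \<delta>*\<tau>/(A-\<delta>)"
    have w1: "\<omega>1 \<ge> 0" unfolding \<omega>1_def using Apos Ad by simp
    have w2: "\<omega>2 \<ge> 0" unfolding \<omega>2_def using \<delta>0 tau0 Ad by simp
    have w12: "\<omega>1 + \<omega>2 \<le> 1"
    proof -
      have "\<delta>*(1 + \<tau>) \<le> (d + H/4)*(1+\<tau>)" using \<delta>le tau0 by (simp add: mult_right_mono)
      then have "\<delta>*(1 + \<tau>) \<le> 3*A/4" using key34 by simp
      then have "A/4 + \<delta>*\<tau> \<le> A - \<delta>" by (simp add: algebra_simps)
      then have "(A/4 + \<delta>*\<tau>)/(A - \<delta>) \<le> 1" using Ad by simp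
      then show ?thesis unfolding \<omega>1_def \<omega>2_def using Ad by (simp add: add_divide_distrib)
    qed
    define r where "r = f + \<omega>1 *\<^sub>R (x - f) + \<omega>2 *\<^sub>R (q0 - f)"
    have rL: "r \<in> Lp"
    proof -
      have "r = (1 - \<omega>1 - \<omega>2) *\<^sub>R f + \<omega>1 *\<^sub>R x + \<omega>2 *\<^sub>R q0"
        unfolding r_def by (simp add: algebra_simps)
      then have "r \<in> convex hull {f, x, q0}"
        unfolding convex_hull_3 using w1 w2 w12 by (intro CollectI exI[of _ "1 - \<omega>1 - \<omega>2"] exI[of _ \<omega>1] exI[of _ \<omega>2]) auto
      moreover have "convex hull {f, x, q0} \<subseteq> Lp"
        using fL x(1) q0L convLp by (intro hull_minimal) auto
      ultimately show ?thesis by blast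
    qed
    have rs: "\<sigma>*(snd r - t) = 0"
    proof -
      have "\<sigma>*(snd r - t) = d + \<omega>1*(X - d) + \<omega>2*(\<sigma>*(snd q0 - t) - d)"
        unfolding r_def X_def dd by (simp add: algebra_simps)
      also have "\<dots> = d + \<omega>1*(4*(\<delta> - d)) - \<omega>2*G"
      proof -
        have e3: "X - d = 4*(\<delta> - d)" using \<delta>X by simp
        have e4: "\<sigma>*(snd q0 - t) - d = -G" using GG by simp
        show ?thesis by (simp only: e3 e4)
      qed
      also have "\<dots> = (d*(A-\<delta>) + A*(\<delta> - d) - \<delta>*\<tau>*G)/(A - \<delta>)"
      proof -
        have f1: "\<omega>1*(4*(\<delta> - d)) = (A*(\<delta> - d))/(A-\<delta>)" unfolding \<omega>1_def using Ad by (simp add: field_simps)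
        have f2: "\<omega>2*G = (\<delta>*\<tau>*G)/(A-\<delta>)" unfolding \<omega>2_def by simp
        have f3: "d + (A*(\<delta> - d))/(A-\<delta>) - (\<delta>*\<tau>*G)/(A-\<delta>) = (d*(A-\<delta>) + A*(\<delta> - d) - \<delta>*\<tau>*G)/(A - \<delta>)"
        proof -
          have ne: "A - \<delta> \<noteq> 0" using Ad by simp
          have "(d*(A-\<delta>) + A*(\<delta> - d) - \<delta>*\<tau>*G)/(A - \<delta>)
              = d*(A-\<delta>)/(A-\<delta>) + A*(\<delta> - d)/(A-\<delta>) - \<delta>*\<tau>*G/(A-\<delta>)"
            by (simp add: add_divide_distrib diff_divide_distrib)
          also have "d*(A-\<delta>)/(A-\<delta>) = d" using ne by simp
          finally show ?thesis by simp
        qed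
        show ?thesis using f1 f2 f3 by simp
      qed
      also have "\<dots> = 0" unfolding A_def by (simp add: algebra_simps)
      finally show ?thesis .
    qed
    then have "snd r = t" using snz by simp
    then have "fst r \<in> D" using slice rL by blast
    then have ar: "a i \<bullet> fst r \<le> b i" using Deq i by blast
    have "a i \<bullet> fst r = a i \<bullet> fst f + \<omega>1 * (a i \<bullet> fst x - a i \<bullet> fst f) + \<omega>2 * (a i \<bullet> fst q0 - a i \<bullet> fst f)"
      unfolding r_def by (simp add: inner_add_right inner_diff_right)
    then have h: "a i \<bullet> fst f + (A/(4*(A-\<delta>)))*(a i \<bullet> fst x - a i \<bullet> fst f)
        + (\<delta>*\<tau>/(A-\<delta>))*(a i \<bullet> fst q0 - a i \<bullet> fst f) \<le> b i"
      using ar unfolding \<omega>1_def \<omega>2_def by simp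
    have "a i \<bullet> fst f + (a i \<bullet> fst x - a i \<bullet> fst f)/4
        + (1/A)*(b i - (a i \<bullet> fst f + \<tau>*(a i \<bullet> fst f - a i \<bullet> fst q0)))*\<delta> \<le> b i"
      by (rule scal1[OF Apos Ad h])
    moreover have "a i \<bullet> fst z = a i \<bullet> fst f + (a i \<bullet> fst x - a i \<bullet> fst f)/4"
      using x(2) by (simp add: inner_add_right inner_diff_right)
    moreover have "a i \<bullet> w = a i \<bullet> fst f + \<tau>*(a i \<bullet> fst f - a i \<bullet> fst q0)"
      unfolding w_def xbar_def by (simp add: inner_add_right inner_diff_right)
    ultimately show ?thesis unfolding \<kappa>_def \<delta>_def by simp
  qed
  define T where "T i = {(a i \<bullet> fst z - b i)/(-(\<sigma>*(snd z - t))) | z. z \<in> S \<and> \<sigma>*(snd z - t) < 0}" for i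
  define c where "c i = Sup (insert (\<kappa>*(b i - a i \<bullet> w)) (T i))" for i
  have Tle: "y \<le> (b i - a i \<bullet> fst z2)/(\<sigma>*(snd z2 - t))"
    if y: "y \<in> insert (\<kappa>*(b i - a i \<bullet> w)) (T i)" and z2: "z2 \<in> S" "\<sigma>*(snd z2 - t) > 0" and i: "i \<in> I"
    for y z2 i
  proof -
    define \<delta>2 where "\<delta>2 = \<sigma>*(snd z2 - t)"
    have d2: "\<delta>2 > 0" using z2 \<delta>2_def by simp
    show ?thesis
    proof (cases "y = \<kappa>*(b i - a i \<bullet> w)")
      case True
      have "a i \<bullet> fst z2 + y*\<delta>2 \<le> b i" using cone[OF z2(1) _ i] z2(2) True \<delta>2_def by simp
      then have "y*\<delta>2 \<le> b i - a i \<bullet> fst z2" by simp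
      then show ?thesis using d2 \<delta>2_def by (simp add: pos_le_divide_eq)
    next
      case False
      then have "y \<in> T i" using y by blast
      then obtain z1 where z1: "z1 \<in> S" "\<sigma>*(snd z1 - t) < 0"
        and yeq: "y = (a i \<bullet> fst z1 - b i)/(-(\<sigma>*(snd z1 - t)))" unfolding T_def by blast
      define \<delta>1 where "\<delta>1 = -(\<sigma>*(snd z1 - t))"
      have d1: "\<delta>1 > 0" using z1 \<delta>1_def by simp
      define m where "m = (\<delta>2/(\<delta>1+\<delta>2)) *\<^sub>R z1 + (\<delta>1/(\<delta>1+\<delta>2)) *\<^sub>R z2"
      have mS: "m \<in> S" unfolding m_def
        using convexD[OF convS z1(1) z2(1)] d1 d2 by (simp add: add_divide_distrib[symmetric])
      define s where "s = \<delta>1 + \<delta>2"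
      have s0: "s > 0" using d1 d2 s_def by simp
      have wsum: "\<delta>2/s + \<delta>1/s = 1" using s0 unfolding s_def by (simp add: add_divide_distrib[symmetric])
      have sm: "snd m = (\<delta>2/s)* snd z1 + (\<delta>1/s)* snd z2" unfolding m_def s_def by simp
      have "(\<delta>2/s)*(snd z1 - t) + (\<delta>1/s)*(snd z2 - t) = ((\<delta>2/s)* snd z1 + (\<delta>1/s)* snd z2) - (\<delta>2/s + \<delta>1/s)*t"
        by (simp add: algebra_simps)
      also have "\<dots> = snd m - t" using wsum sm by simp
      finally have em: "snd m - t = (\<delta>2/s)*(snd z1 - t) + (\<delta>1/s)*(snd z2 - t)" by simp
      have "\<sigma>*(snd m - t) = \<sigma>*((\<delta>2/s)*(snd z1 - t) + (\<delta>1/s)*(snd z2 - t))" by (simp only: em)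
      also have "\<dots> = (\<delta>2/s)*(\<sigma>*(snd z1 - t)) + (\<delta>1/s)*(\<sigma>*(snd z2 - t))"
        by (simp add: algebra_simps)
      also have "\<dots> = (\<delta>2/s)*(-\<delta>1) + (\<delta>1/s)*\<delta>2" unfolding \<delta>1_def \<delta>2_def by simp
      also have "\<dots> = 0" by (simp add: algebra_simps)
      finally have "snd m = t" using snz by simp
      then have "fst m \<in> D" using slice SinL mS by blast
      then have "a i \<bullet> fst m \<le> b i" using Deq i by blast
      then have "(\<delta>2 * (a i \<bullet> fst z1) + \<delta>1 * (a i \<bullet> fst z2))/(\<delta>1+\<delta>2) \<le> b i"
        unfolding m_def using d1 d2 by (simp add: inner_add_right add_divide_distrib)
      then have "\<delta>2 * (a i \<bullet> fst z1) + \<delta>1 * (a i \<bullet> fst z2) \<le> b i * (\<delta>1+\<delta>2)"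
        using d1 d2 by (simp add: pos_divide_le_eq)
      then have "\<delta>2 * (a i \<bullet> fst z1 - b i) \<le> \<delta>1 * (b i - a i \<bullet> fst z2)"
        by (simp add: algebra_simps)
      then have "(a i \<bullet> fst z1 - b i)/\<delta>1 \<le> (b i - a i \<bullet> fst z2)/\<delta>2"
        using d1 d2 by (simp add: field_simps mult.commute)
      then show ?thesis using yeq \<delta>1_def \<delta>2_def by simp
    qed
  qed
  have bdd: "bdd_above (insert (\<kappa>*(b i - a i \<bullet> w)) (T i))" if i: "i \<in> I" for i
    unfolding bdd_above_def using Tle[OF _ zs(1) zs(2) i] by blast
  have cge: "\<forall>i\<in>I. c i \<ge> \<kappa>*(b i - a i \<bullet> w)"
    unfolding c_def using bdd by (auto intro: cSup_upper)
  define B where "B = {x::'a\<times>real. -1 \<le> \<sigma>*(snd x - t) \<and> (\<forall>i\<in>I. a i \<bullet> fst x + c i * (\<sigma>*(snd x - t)) \<le> b i)}"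
  have Blf: "B \<in> lf_poly (card I + 1)" unfolding B_def
    by (rule cone_lf[OF lfD finI Deq anz sig tZ kap cge])
  have "S \<subseteq> B"
  proof
    fix z assume zS: "z \<in> S"
    have l1: "-1 \<le> \<sigma>*(snd z - t)" using low SinL zS by blast
    have "a i \<bullet> fst z + c i * (\<sigma>*(snd z - t)) \<le> b i" if i: "i \<in> I" for i
    proof (cases "\<sigma>*(snd z - t) > 0")
      case True
      have "c i \<le> (b i - a i \<bullet> fst z)/(\<sigma>*(snd z - t))"
        unfolding c_def by (rule cSup_least) (use Tle[OF _ zS True i] in auto)
      then show ?thesis using True by (simp add: le_divide_eq algebra_simps)
    next
      case False
      show ?thesis
      proof (cases "\<sigma>*(snd z - t) = 0")
        case True
        then have "snd z = t" using snz by simp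
        then have "fst z \<in> D" using slice SinL zS by blast
        then show ?thesis using Deq i True by auto
      next
        case False2: False
        have neg: "\<sigma>*(snd z - t) < 0" using False False2 by (metis linorder_neqE_linordered_idom)
        define e where "e = -(\<sigma>*(snd z - t))"
        have e0: "e > 0" using neg e_def by simp
        have "(a i \<bullet> fst z - b i)/e \<in> T i" unfolding T_def e_def using zS neg by blast
        then have "(a i \<bullet> fst z - b i)/e \<le> c i"
          unfolding c_def using bdd[OF i] by (auto intro: cSup_upper)
        then have "a i \<bullet> fst z - b i \<le> c i * e" using e0 by (simp add: pos_divide_le_eq)
        then show ?thesis unfolding e_def by (simp add: algebra_simps)
      qed
    qed
    then show "z \<in> B" unfolding B_def using l1 by blast
  qed
  then show ?thesis using Blf by blast
qed



lemma num_strict: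
  fixes g H d :: real
  assumes H0: "0 \<le> H" and Hg: "H \<le> g" and gH: "g + H \<le> 1" and dg: "4*d < g" and P: "4*d + H > 0"
  shows "(4*d + H)*(1 - d) < g*(3 - 4*d - H)"
proof -
  have g0: "g \<ge> 0" using H0 Hg by simp
  define phi where "phi x = g*(3 - 4*x - H) - (4*x + H)*(1 - x)" for x
  have k1: "phi d = phi (g/4) + (d - g/4)*(4*d + H - 3*g - 4)"
    unfolding phi_def by (simp add: field_simps)
  have n1: "d - g/4 < 0" using dg by argo
  have n2: "4*d + H - 3*g - 4 < 0" using dg Hg g0 gH H0 by linarith
  have k2: "(d - g/4)*(4*d + H - 3*g - 4) > 0" using n1 n2 by (rule mult_neg_neg)
  have "phi (g/4) = g*(2 - 3*(g+H)/4) - H" unfolding phi_def by (simp add: field_simps)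
  moreover have "g*(2 - 3*(g+H)/4) \<ge> g*(5/4)"
  proof (rule mult_left_mono)
    show "5/4 \<le> 2 - 3*(g+H)/4" using gH by argo
  qed (use g0 in simp)
  ultimately have k3: "phi (g/4) \<ge> 0" using Hg g0 by argo
  have "phi d > 0" using k1 k2 k3 by simp
  then show ?thesis unfolding phi_def by simp
qed

lemma num_choice:
  fixes g H d :: real
  assumes H0: "0 \<le> H" and Hg: "H \<le> g" and gH: "g + H \<le> 1" and dg: "4*d < g" and P: "4*d + H > 0"
  shows "\<exists>u0<g. \<forall>u. u > u0 \<longrightarrow> 3*u > 4*d + H \<and> u*(3 - 4*d - H) \<ge> (4*d + H)*(1 - d)"
proof -
  have g0: "g > 0" using H0 Hg dg P by linarith
  have P3: "3 - 4*d - H > 0" using dg Hg gH H0 by linarith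
  define u0 where "u0 = max ((4*d + H)/3) ((4*d + H)*(1 - d)/(3 - 4*d - H))"
  have "(4*d + H)/3 < g" using dg Hg g0 by argo
  moreover have "(4*d + H)*(1 - d)/(3 - 4*d - H) < g"
    using num_strict[OF assms] P3 by (simp add: pos_divide_less_eq)
  ultimately have "u0 < g" unfolding u0_def by simp
  moreover have "3*u > 4*d + H \<and> u*(3 - 4*d - H) \<ge> (4*d + H)*(1 - d)" if "u > u0" for u
  proof
    have "(4*d + H)/3 < u" using that unfolding u0_def by (meson max.strict_boundedE)
    then show "3*u > 4*d + H" by argo
    have "(4*d + H)*(1 - d)/(3 - 4*d - H) \<le> u" using that unfolding u0_def by (meson max.strict_boundedE less_imp_le)
    then show "u*(3 - 4*d - H) \<ge> (4*d + H)*(1 - d)" using P3 by (simp add: pos_divide_le_eq)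
  qed
  ultimately show ?thesis by blast
qed

theorem lemma5p4:
  fixes L :: "('a::euclidean_space \<times> real) set"
    and D :: "'a set"
    and f :: "'a \<times> real"
    and \<gamma> :: real and m :: nat and t :: int
  assumes "L \<in> lf_poly_all"
    and "f \<in> interior L"
    and "0 < \<gamma>" and "\<gamma> \<le> 1"
    and "max_lattice_free D" and "D \<in> lf_poly m"
    and "L \<inter> (UNIV \<times> {real_of_int t}) \<subseteq> D \<times> {real_of_int t}"
    and "width ((\<lambda>x. \<gamma> *\<^sub>R (x - f) + f) ` L) (0, 1) \<le> 1"
    and "(\<lambda>x. \<gamma> *\<^sub>R (x - f) + f) ` L \<inter> (UNIV \<times> {real_of_int t}) \<noteq> {}"
  shows "\<exists>B. B \<in> lf_poly (m + 1) \<and> (\<lambda>x. (\<gamma> / 4) *\<^sub>R (x - f) + f) ` L \<subseteq> B"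
proof -
  define tt where "tt = real_of_int t"
  have tZ: "tt \<in> \<int>" unfolding tt_def by simp
  have lfL: "lattice_free L" using assms(1) by (simp add: lf_poly_all_def)
  have convL: "convex L" using lfL by (simp add: lattice_free_def)
  have fL: "f \<in> L" using assms(2) interior_subset by blast
  have lfD: "lattice_free D" using assms(5) by (simp add: max_lattice_free_def)
  have Dpoly: "polyhedron D" and Dfin: "finite {C. C facet_of D}" and Dcard: "card {C. C facet_of D} \<le> m"
    using assms(6) by (auto simp: lf_poly_def)
  obtain a b where ab: "\<And>C. C facet_of D \<Longrightarrow> a C \<noteq> 0 \<and> D \<subseteq> {x. a C \<bullet> x \<le> b C}"
    and Deq0: "D = (\<Inter>C\<in>{C. C facet_of D}. {x. a C \<bullet> x \<le> b C})"
    using facet_rep[OF Dpoly lf_interior_ne[OF lfD]] by blast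
  define I where "I = {C. C facet_of D}"
  have finI: "finite I" using Dfin I_def by simp
  have Deq: "D = (\<Inter>i\<in>I. {x. a i \<bullet> x \<le> b i})" using Deq0 I_def by simp
  have anz: "\<forall>i\<in>I. a i \<noteq> 0" using ab I_def by simp
  have cardI: "card I \<le> m" using Dcard I_def by simp
  have Ine: "I \<noteq> {}"
  proof
    assume "I = {}"
    then show False using no_descent[OF lfD finI Deq, of 0] by simp
  qed
  have m1: "m \<ge> 1" using cardI Ine finI by (meson card_0_eq le_trans less_one not_le)
  define g where "g = (\<lambda>x::'a\<times>real. \<gamma> *\<^sub>R (x - f) + f)"
  define Lp where "Lp = g ` L"
  have convLp: "convex Lp"
  proof -
    have "g = (\<lambda>x. (f - \<gamma> *\<^sub>R f) + \<gamma> *\<^sub>R x)" unfolding g_def by (auto simp: algebra_simps)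
    then show ?thesis unfolding Lp_def using convex_affinity[OF convL] by metis
  qed
  have LpL: "Lp \<subseteq> L"
  proof
    fix y assume "y \<in> Lp"
    then obtain x where x: "x \<in> L" "y = g x" unfolding Lp_def by blast
    have "(1 - \<gamma>) *\<^sub>R f + \<gamma> *\<^sub>R x \<in> L" using convexD_alt[OF convL fL x(1)] assms(3,4) by simp
    moreover have "g x = (1 - \<gamma>) *\<^sub>R f + \<gamma> *\<^sub>R x" unfolding g_def by (simp add: algebra_simps)
    ultimately show "y \<in> L" using x by simp
  qed
  have fLp: "f \<in> Lp" unfolding Lp_def g_def using fL by (intro image_eqI[of _ _ f]) auto
  define S where "S = (\<lambda>x. (\<gamma> / 4) *\<^sub>R (x - f) + f) ` L"
  have Sdef: "S = (\<lambda>x. (1/4) *\<^sub>R (x - f) + f) ` Lp"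
    unfolding S_def Lp_def g_def image_image by (auto simp: algebra_simps)
  have slice: "\<forall>x\<in>Lp. snd x = tt \<longrightarrow> fst x \<in> D"
  proof (intro ballI impI)
    fix x assume "x \<in> Lp" "snd x = tt"
    then have "x \<in> L \<inter> (UNIV \<times> {real_of_int t})" using LpL tt_def by (cases x) auto
    then show "fst x \<in> D" using assms(7) by auto
  qed
  have SinLp: "S \<subseteq> Lp"
  proof
    fix z assume "z \<in> S"
    then obtain x where x: "x \<in> Lp" "z = (1/4) *\<^sub>R (x - f) + f" using Sdef by blast
    have eq: "(1/4::real) *\<^sub>R (x - f) + f = (1 - 1/4::real) *\<^sub>R f + (1/4::real) *\<^sub>R x"
      by (simp add: algebra_simps flip: scaleR_add_left)
    have "(1 - 1/4::real) *\<^sub>R f + (1/4::real) *\<^sub>R x \<in> Lp"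
      by (rule convexD_alt[OF convLp fLp x(1)]) auto
    then show "z \<in> Lp" using x(2) eq by metis
  qed
  have sndS: "\<exists>x\<in>Lp. snd z = (snd x - snd f)/4 + snd f" if zS: "z \<in> S" for z
  proof -
    obtain x where x: "x \<in> Lp" "z = (1/4) *\<^sub>R (x - f) + f" using zS Sdef by blast
    have "snd z = (snd x - snd f)/4 + snd f" unfolding x(2) by simp
    then show ?thesis using x(1) by blast
  qed
  have wid: "snd x - snd y \<le> 1" if "x \<in> Lp" "y \<in> Lp" for x y
  proof -
    have ip: "(0::'a, 1::real) \<bullet> z = snd z" for z :: "'a \<times> real" by (simp add: inner_prod_def)
    have "width Lp (0, 1) \<le> 1" using assms(8) unfolding Lp_def g_def .
    then have W: "(SUP z\<in>Lp. ereal (snd z)) - (INF z\<in>Lp. ereal (snd z)) \<le> 1"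
      unfolding width_def ip .
    have "ereal (snd x) \<le> (SUP z\<in>Lp. ereal (snd z))" using that(1) by (rule SUP_upper)
    moreover have "(INF z\<in>Lp. ereal (snd z)) \<le> ereal (snd y)" using that(2) by (rule INF_lower)
    ultimately have "ereal (snd x) - ereal (snd y) \<le> (SUP z\<in>Lp. ereal (snd z)) - (INF z\<in>Lp. ereal (snd z))"
      by (rule ereal_minus_mono)
    then have "ereal (snd x - snd y) \<le> (SUP z\<in>Lp. ereal (snd z)) - (INF z\<in>Lp. ereal (snd z))" by simp
    then have "ereal (snd x - snd y) \<le> 1" using W by (rule order_trans)
    then show ?thesis by (simp add: one_ereal_def)
  qed
  obtain q0' where q0'I: "q0' \<in> (\<lambda>x. \<gamma> *\<^sub>R (x - f) + f) ` L \<inter> (UNIV \<times> {real_of_int t})"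
    using assms(9) ex_in_conv by metis
  have q0': "q0' \<in> (\<lambda>x. \<gamma> *\<^sub>R (x - f) + f) ` L" "q0' \<in> UNIV \<times> {real_of_int t}"
    using q0'I by (rule IntD1, rule IntD2)
  obtain q where q: "q \<in> Lp" "snd q = tt"
  proof
    show "q0' \<in> Lp" using q0'(1) unfolding Lp_def g_def .
    show "snd q0' = tt" using q0'(2) unfolding tt_def by (auto simp: mem_Times_iff)
  qed
  have ne: "snd ` Lp \<noteq> {}" using q by blast
  have bdda: "bdd_above (snd ` Lp)" unfolding bdd_above_def
    using wid[OF _ q(1)] by (intro exI[of _ "snd q + 1"]) (auto simp: algebra_simps)
  have bddb: "bdd_below (snd ` Lp)" unfolding bdd_below_def
    using wid[OF q(1)] by (intro exI[of _ "snd q - 1"]) (auto simp: algebra_simps)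
  define hi where "hi = Sup (snd ` Lp)"
  define lo where "lo = Inf (snd ` Lp)"
  have hiU: "snd x \<le> hi" if "x \<in> Lp" for x unfolding hi_def using bdda that by (auto intro: cSup_upper)
  have loL: "lo \<le> snd x" if "x \<in> Lp" for x unfolding lo_def using bddb that by (auto intro: cInf_lower)
  have hilo: "hi \<le> lo + 1"
  proof -
    have "snd x - 1 \<le> lo" if xL: "x \<in> Lp" for x
      unfolding lo_def
    proof (rule cInf_greatest[OF ne])
      fix v assume "v \<in> snd ` Lp"
      then obtain y where y: "y \<in> Lp" "v = snd y" by blast
      then show "snd x - 1 \<le> v" using wid[OF xL y(1)] by simp
    qed
    then have "snd x \<le> lo + 1" if "x \<in> Lp" for x using that by fastforce
    then show ?thesis unfolding hi_def using ne by (auto intro!: cSup_least)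
  qed
  have thi: "tt \<le> hi" using hiU q by fastforce
  have tlo: "lo \<le> tt" using loL q by fastforce
  have Scorr: "(\<lambda>x. (\<gamma> / 4) *\<^sub>R (x - f) + f) ` L = S" unfolding S_def ..
  have loS: "lo \<le> snd z" "snd z \<le> hi" if zS: "z \<in> S" for z
  proof -
    have "z \<in> Lp" using SinLp zS by blast
    then show "lo \<le> snd z" "snd z \<le> hi" using loL hiU by blast+
  qed
  show ?thesis
  proof (cases "\<forall>z\<in>S. snd z \<le> tt")
    case True
    define B where "B = {x::'a\<times>real. -1 \<le> 1*(snd x - tt) \<and> 1*(snd x - tt) \<le> 0}"
    have "B \<in> lf_poly 2" unfolding B_def by (rule slab_lf) (use tZ in auto)
    then have "B \<in> lf_poly (m+1)" using m1 by (auto intro: lf_poly_mono)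
    moreover have "S \<subseteq> B"
    proof
      fix z assume zS: "z \<in> S"
      have "tt - 1 \<le> snd z" using loS[OF zS] hilo thi by linarith
      then show "z \<in> B" unfolding B_def using True zS by auto
    qed
    ultimately show ?thesis using Scorr by blast
  next
    case False1: False
    show ?thesis
    proof (cases "\<forall>z\<in>S. snd z \<ge> tt")
      case True
      define B where "B = {x::'a\<times>real. -1 \<le> (-1)*(snd x - tt) \<and> (-1)*(snd x - tt) \<le> 0}"
      have "B \<in> lf_poly 2" unfolding B_def by (rule slab_lf) (use tZ in auto)
      then have "B \<in> lf_poly (m+1)" using m1 by (auto intro: lf_poly_mono)
      moreover have "S \<subseteq> B"
      proof
        fix z assume zS: "z \<in> S"
        have "snd z \<le> tt + 1" using loS[OF zS] hilo tlo by linarith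
        then show "z \<in> B" unfolding B_def using True zS by auto
      qed
      ultimately show ?thesis using Scorr by blast
    next
      case False2: False
      obtain z1 where z1: "z1 \<in> S" "snd z1 < tt" using False2 by auto
      obtain z2 where z2: "z2 \<in> S" "snd z2 > tt" using False1 by auto
      obtain x1 where x1: "x1 \<in> Lp" "snd z1 = (snd x1 - snd f)/4 + snd f" using sndS[OF z1(1)] by blast
      obtain x2 where x2: "x2 \<in> Lp" "snd z2 = (snd x2 - snd f)/4 + snd f" using sndS[OF z2(1)] by blast
      define d0 where "d0 = snd f - tt"
      define G0 where "G0 = snd f - lo"
      define H0 where "H0 = hi - snd f"
      have G0ge: "G0 \<ge> snd f - snd x1" unfolding G0_def using loL[OF x1(1)] by simp
      have H0ge: "H0 \<ge> snd x2 - snd f" unfolding H0_def using hiU[OF x2(1)] by simp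
      have dG: "4*d0 < G0" using G0ge x1(2) z1(2) unfolding d0_def by argo
      have dH: "4*(-d0) < H0" using H0ge x2(2) z2(2) unfolding d0_def by argo
      have G00: "G0 \<ge> 0" unfolding G0_def using loL[OF fLp] by simp
      have H00: "H0 \<ge> 0" unfolding H0_def using hiU[OF fLp] by simp
      have GH1: "G0 + H0 \<le> 1" unfolding G0_def H0_def using hilo by simp
      have low1: "\<forall>x\<in>Lp. -1 \<le> 1*(snd x - tt)" using loL hilo thi by fastforce
      have low2: "\<forall>x\<in>Lp. -1 \<le> (-1)*(snd x - tt)" using hiU hilo tlo by fastforce
      have cardm: "card I + 1 \<le> m + 1" using cardI by simp
      show ?thesis
      proof (cases "H0 \<le> G0")
        case True
        obtain u0 where u0: "u0 < G0" and u0P: "\<And>u. u > u0 \<Longrightarrow> 3*u > 4*d0 + H0 \<and> u*(3 - 4*d0 - H0) \<ge> (4*d0 + H0)*(1 - d0)"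
          using num_choice[OF H00 True _ dG] GH1 dH by (auto simp: add.commute)
        have "Inf (snd ` Lp) < snd f - u0" using u0 unfolding G0_def lo_def by simp
        then obtain y where y: "y \<in> snd ` Lp" "y < snd f - u0" using cInf_less_iff[OF ne bddb] by blast
        then obtain q0 where q0: "q0 \<in> Lp" "snd q0 < snd f - u0" by blast
        define G where "G = d0 - 1*(snd q0 - tt)"
        have Gu: "G > u0" unfolding G_def d0_def using q0(2) by simp
        have sig: "(1::real) = 1 \<or> (1::real) = -1" by simp
        have dd: "d0 = 1*(snd f - tt)" unfolding d0_def by simp
        have Hb: "\<forall>x\<in>Lp. 1*(snd x - tt) \<le> d0 + H0" unfolding d0_def H0_def using hiU by simp
        have above: "\<exists>z\<in>S. 1*(snd z - tt) > 0" using z2 by auto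
        obtain B where B: "B \<in> lf_poly (card I + 1)" "S \<subseteq> B"
          using core[OF lfD finI Deq anz sig tZ convLp fLp q0(1) slice Sdef dd G_def Hb low1 _ _ above]
            u0P[OF Gu] by blast
        then show ?thesis using Scorr lf_poly_mono[OF B(1) cardm] by blast
      next
        case False
        have GH: "G0 \<le> H0" using False by simp
        have dG': "4*(-d0) + G0 > 0" using dG by simp
        obtain u0 where u0: "u0 < H0" and u0P: "\<And>u. u > u0 \<Longrightarrow> 3*u > 4*(-d0) + G0 \<and> u*(3 - 4*(-d0) - G0) \<ge> (4*(-d0) + G0)*(1 - (-d0))"
          using num_choice[OF G00 GH _ dH dG'] GH1 by (auto simp: add.commute)
        have "snd f + u0 < Sup (snd ` Lp)" using u0 unfolding H0_def hi_def by simp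
        then obtain y where y: "y \<in> snd ` Lp" "snd f + u0 < y" using less_cSup_iff[OF ne bdda] by blast
        then obtain q0 where q0: "q0 \<in> Lp" "snd f + u0 < snd q0" by blast
        define G where "G = (-d0) - (-1)*(snd q0 - tt)"
        have Gu: "G > u0" unfolding G_def d0_def using q0(2) by simp
        have sig: "(-1::real) = 1 \<or> (-1::real) = -1" by simp
        have dd: "-d0 = (-1)*(snd f - tt)" unfolding d0_def by simp
        have Hb: "\<forall>x\<in>Lp. (-1)*(snd x - tt) \<le> (-d0) + G0" unfolding d0_def G0_def using loL by simp
        have above: "\<exists>z\<in>S. (-1)*(snd z - tt) > 0" using z1 by auto
        obtain B where B: "B \<in> lf_poly (card I + 1)" "S \<subseteq> B"
          using core[OF lfD finI Deq anz sig tZ convLp fLp q0(1) slice Sdef dd G_def Hb low2 _ _ above]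
            u0P[OF Gu] by blast
        then show ?thesis using Scorr lf_poly_mono[OF B(1) cardm] by blast
      qed
    qed
  qed
qed


end
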